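(* Let $I=(G,\mathcal{T},p)$ be a \textsc{DAG Multicut} instance satisfying the standing assumptions below, and let $G^*$ be its degree-reduced graph, with the sets $B_i$ as in its definition. Then: (1) $|N^+_{G^*}(T^s)|\le rp$; (2) for each $1\le i\le r$, $B_i$ is the $s_i-t_i$ mincut closest to $s_i$ in $G^*$; (3) $\Phi(I')=\Phi(I)$ where $I'=(G^*,\mathcal{T},p)$; (4) a set $Z\subseteq V(G)$ is a multicut in $(G^*,\mathcal{T})$ if and only if $Z$ is a multicut in $(G,\mathcal{T})$ such that for every $1\le i\le r$ and every $v\in B_i$, either $v\in Z$ or $Z$ is a $\{v\}-\{t_i\}$ separator in $G$; in particular $I'$ is a YES instance iff $I$ admits a solution with this property; (5) $S(G^*,v)\subseteq S(G,v)$ for every $v\in V(G)$, and if $(s_i,v)\in E(G^* )$ for some $i$ then $S(G^*,v)=S(G,v)$.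
   Context: \textsc{DAG Multicut}: input a directed acyclic graph $G$, terminal pairs $\mathcal{T}=\{(s_i,t_i):1\le i\le r\}$, integer $p$; terminals are all $s_i,t_i$. Standing assumptions: all terminals are pairwise distinct, each $s_i$ has no in-neighbours, each $t_i$ has no out-neighbours, and $\mathrm{cut}_G(s_i,t_i)\le p$ for all $i$. $T^s=\{s_1,\dots,s_r\}$; $N^+_G(Y)=(\bigcup_{y\in Y}\{u:(y,u)\in E(G)\})\setminus Y$. A multicut is a set of non-terminal vertices $Z$ with $t_i$ unreachable from $s_i$ in $G\setminus Z$ for all $i$; a solution is a multicut of size $\le p$. For disjoint non-empty $X,Y$, an $X-Y$ separator is a set of non-terminal vertices disjoint from $X\cup Y$ meeting every $X$–$Y$ path; $\mathrm{cut}_G(X,Y)$ is its minimum size ($\infty$ if an arc goes from $X$ to $Y$). A minimal separator $Z$ is important if no other $X-Y$ separator $Z'$ with $|Z'|\le|Z|$ satisfies: every vertex reachable from $X$ in $G\setminus Z$ is reachable from $X$ in $G\setminus Z'$. The unique minimum-size important $X-Y$ separator is the $X-Y$ mincut closest to $Y$; the $X-Y$ mincut closest to $X$ is the $Y-X$ mincut closest to $X$ in the graph with all arcs reversed. $S(G,v)$ is the set of sources $s_i$ from which $v$ is reachable in $G$. The potential is $\Phi((G,\mathcal{T},p))=(r+1)p-\sum_i\mathrm{cut}_G(s_i,t_i)$. Degree-reduced graph $G^*$: let $B_i$ be the $s_i-t_i$ mincut closest to $s_i$ in $G$; $V(G^* )=V(G)$, its arcs are all arcs of $G$ not incident to $T^s$,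 plus, for each $1\le i\le r$, the arcs $(s_i,v)$ for all $v\in B_i$, and the arcs $(s_i,v)$ for all $v\in\bigcup_{i'=1}^r B_{i'}$ with $s_i\in S(G,v)$ such that $v$ is not reachable in $G$ from any vertex of $B_i$. *)

theory Defs
  imports Main "HOL-Library.Extended_Real"
begin

definition idx :: "nat \<Rightarrow> nat set" where
  "idx r = {1..r}"

definition terminals :: "nat \<Rightarrow> (nat \<Rightarrow> 'a) \<Rightarrow> (nat \<Rightarrow> 'a) \<Rightarrow> 'a set" where
  "terminals r s t = s ` idx r \<union> t ` idx r"

definition del_arcs :: "('a \<times> 'a) set \<Rightarrow> 'a set \<Rightarrow> ('a \<times> 'a) set" where
  "del_arcs E Z = {(u, v). (u, v) \<in> E \<and> u \<notin> Z \<and> v \<notin> Z}"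

definition reach_set :: "('a \<times> 'a) set \<Rightarrow> 'a set \<Rightarrow> 'a set \<Rightarrow> 'a set" where
  "reach_set E Z X = {v. \<exists>x\<in>X. (x, v) \<in> (del_arcs E Z)\<^sup>*}"

definition is_sep :: "'a set \<Rightarrow> ('a \<times> 'a) set \<Rightarrow> 'a set \<Rightarrow> 'a set \<Rightarrow> 'a set \<Rightarrow> 'a set \<Rightarrow> bool" where
  "is_sep V E T X Y Z \<longleftrightarrow> Z \<subseteq> V \<and> Z \<inter> T = {} \<and> Z \<inter> (X \<union> Y) = {} \<and>
     (\<forall>x\<in>X. \<forall>y\<in>Y. (x, y) \<notin> (del_arcs E Z)\<^sup>*)"

definition cut :: "'a set \<Rightarrow> ('a \<times> 'a) set \<Rightarrow> 'a set \<Rightarrow> 'a set \<Rightarrow> 'a set \<Rightarrow> enat" where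
  "cut V E T X Y = (INF Z \<in> {Z. is_sep V E T X Y Z}. enat (card Z))"

definition minimal_sep :: "'a set \<Rightarrow> ('a \<times> 'a) set \<Rightarrow> 'a set \<Rightarrow> 'a set \<Rightarrow> 'a set \<Rightarrow> 'a set \<Rightarrow> bool" where
  "minimal_sep V E T X Y Z \<longleftrightarrow> is_sep V E T X Y Z \<and> (\<forall>Z'. Z' \<subset> Z \<longrightarrow> \<not> is_sep V E T X Y Z')"

definition important_sep :: "'a set \<Rightarrow> ('a \<times> 'a) set \<Rightarrow> 'a set \<Rightarrow> 'a set \<Rightarrow> 'a set \<Rightarrow> 'a set \<Rightarrow> bool" where
  "important_sep V E T X Y Z \<longleftrightarrow> minimal_sep V E T X Y Z \<and>
     \<not> (\<exists>Z'. Z' \<noteq> Z \<and> is_sep V E T X Y Z' \<and> card Z' \<le> card Z \<and>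
            reach_set E Z X \<subseteq> reach_set E Z' X)"

definition mincut_closest_to_Y :: "'a set \<Rightarrow> ('a \<times> 'a) set \<Rightarrow> 'a set \<Rightarrow> 'a set \<Rightarrow> 'a set \<Rightarrow> 'a set \<Rightarrow> bool" where
  "mincut_closest_to_Y V E T X Y Z \<longleftrightarrow> important_sep V E T X Y Z \<and>
     (\<forall>Z'. important_sep V E T X Y Z' \<longrightarrow> card Z \<le> card Z')"

definition mincut_closest_to_X :: "'a set \<Rightarrow> ('a \<times> 'a) set \<Rightarrow> 'a set \<Rightarrow> 'a set \<Rightarrow> 'a set \<Rightarrow> 'a set \<Rightarrow> bool" where
  "mincut_closest_to_X V E T X Y Z \<longleftrightarrow> mincut_closest_to_Y V (E\<inverse>) T Y X Z"

definition out_nbh :: "('a \<times> 'a) set \<Rightarrow> 'a set \<Rightarrow> 'a set" where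
  "out_nbh E Y = (\<Union>y\<in>Y. {u. (y, u) \<in> E}) - Y"

definition src_set :: "('a \<times> 'a) set \<Rightarrow> nat \<Rightarrow> (nat \<Rightarrow> 'a) \<Rightarrow> 'a \<Rightarrow> 'a set" where
  "src_set E r s v = {s i | i. i \<in> idx r \<and> (s i, v) \<in> E\<^sup>*}"

definition multicut :: "'a set \<Rightarrow> ('a \<times> 'a) set \<Rightarrow> nat \<Rightarrow> (nat \<Rightarrow> 'a) \<Rightarrow> (nat \<Rightarrow> 'a) \<Rightarrow> 'a set \<Rightarrow> bool" where
  "multicut V E r s t Z \<longleftrightarrow> Z \<subseteq> V \<and> Z \<inter> terminals r s t = {} \<and>
     (\<forall>i\<in>idx r. (s i, t i) \<notin> (del_arcs E Z)\<^sup>*)"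

definition solution :: "'a set \<Rightarrow> ('a \<times> 'a) set \<Rightarrow> nat \<Rightarrow> (nat \<Rightarrow> 'a) \<Rightarrow> (nat \<Rightarrow> 'a) \<Rightarrow> nat \<Rightarrow> 'a set \<Rightarrow> bool" where
  "solution V E r s t p Z \<longleftrightarrow> multicut V E r s t Z \<and> card Z \<le> p"

definition potential :: "'a set \<Rightarrow> ('a \<times> 'a) set \<Rightarrow> nat \<Rightarrow> (nat \<Rightarrow> 'a) \<Rightarrow> (nat \<Rightarrow> 'a) \<Rightarrow> nat \<Rightarrow> ereal" where
  "potential V E r s t p = ereal (real ((r + 1) * p)) -
     ereal_of_enat (\<Sum>i\<in>idx r. cut V E (terminals r s t) {s i} {t i})"

definition dag_mc_instance :: "'a set \<Rightarrow> ('a \<times> 'a) set \<Rightarrow> nat \<Rightarrow> (nat \<Rightarrow> 'a) \<Rightarrow> (nat \<Rightarrow> 'a) \<Rightarrow> nat \<Rightarrow> bool" where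
  "dag_mc_instance V E r s t p \<longleftrightarrow> finite V \<and> E \<subseteq> V \<times> V \<and> acyclic E \<and>
     s ` idx r \<subseteq> V \<and> t ` idx r \<subseteq> V \<and>
     inj_on s (idx r) \<and> inj_on t (idx r) \<and> s ` idx r \<inter> t ` idx r = {} \<and>
     (\<forall>i\<in>idx r. \<forall>u. (u, s i) \<notin> E) \<and> (\<forall>i\<in>idx r. \<forall>u. (t i, u) \<notin> E) \<and>
     (\<forall>i\<in>idx r. cut V E (terminals r s t) {s i} {t i} \<le> enat p)"

definition Bset :: "'a set \<Rightarrow> ('a \<times> 'a) set \<Rightarrow> nat \<Rightarrow> (nat \<Rightarrow> 'a) \<Rightarrow> (nat \<Rightarrow> 'a) \<Rightarrow> nat \<Rightarrow> 'a set" where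
  "Bset V E r s t i = (THE Z. mincut_closest_to_X V E (terminals r s t) {s i} {t i} Z)"

text \<open>Arc set of the degree-reduced graph G* (vertex set unchanged).\<close>
definition reduced_arcs :: "'a set \<Rightarrow> ('a \<times> 'a) set \<Rightarrow> nat \<Rightarrow> (nat \<Rightarrow> 'a) \<Rightarrow> (nat \<Rightarrow> 'a) \<Rightarrow> ('a \<times> 'a) set" where
  "reduced_arcs V E r s t =
     {(u, v). (u, v) \<in> E \<and> u \<notin> s ` idx r \<and> v \<notin> s ` idx r}
     \<union> {(s i, v) | i v. i \<in> idx r \<and> v \<in> Bset V E r s t i}
     \<union> {(s i, v) | i v. i \<in> idx r \<and> v \<in> (\<Union>i'\<in>idx r. Bset V E r s t i') \<and>
          s i \<in> src_set E r s v \<and>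
          \<not> (\<exists>b\<in>Bset V E r s t i. (b, v) \<in> E\<^sup>*)}"

end

theory Submission
  imports Defs
begin


lemma del_arcs_sub: "del_arcs E Z \<subseteq> E" by (auto simp: del_arcs_def)
lemma del_arcs_empty[simp]: "del_arcs E {} = E" by (auto simp: del_arcs_def)
lemma del_arcs_anti: "Z \<subseteq> Z' \<Longrightarrow> del_arcs E Z' \<subseteq> del_arcs E Z" by (auto simp: del_arcs_def)
lemma del_arcs_conv: "del_arcs (E\<inverse>) Z = (del_arcs E Z)\<inverse>" by (auto simp: del_arcs_def)

lemma rtr_conv_del: "((a,b) \<in> (del_arcs (E\<inverse>) Z)\<^sup>*) = ((b,a) \<in> (del_arcs E Z)\<^sup>*)"
  by (simp add: del_arcs_conv rtrancl_converse)

lemma is_sep_conv: "is_sep V (E\<inverse>) T {y} {x} Z = is_sep V E T {x} {y} Z"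
  unfolding is_sep_def by (auto simp: rtr_conv_del)
lemma is_sep_conv_fun: "is_sep V (E\<inverse>) T {y} {x} = is_sep V E T {x} {y}"
  by (intro ext, rule is_sep_conv)
lemma cut_conv: "cut V (E\<inverse>) T {y} {x} = cut V E T {x} {y}"
  unfolding cut_def is_sep_conv_fun ..
lemma reach_conv: "(v \<in> reach_set (E\<inverse>) Z {x}) = ((v,x) \<in> (del_arcs E Z)\<^sup>*)"
  unfolding reach_set_def by (simp add: rtr_conv_del)

lemma del_rtr_sub: "(a,b) \<in> (del_arcs E Z)\<^sup>* \<Longrightarrow> (a,b) \<in> E\<^sup>*"
  using rtrancl_mono[OF del_arcs_sub] by blast

lemma del_rtr_anti: "(a,b) \<in> (del_arcs E Z')\<^sup>* \<Longrightarrow> Z \<subseteq> Z' \<Longrightarrow> (a,b) \<in> (del_arcs E Z)\<^sup>*"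
  using rtrancl_mono[OF del_arcs_anti] by blast

lemma path_hits:
  assumes "(a,b) \<in> (del_arcs E Z)\<^sup>*" "(a,b) \<notin> (del_arcs E (Z \<union> B))\<^sup>*"
  shows "\<exists>c\<in>B. c \<notin> Z \<and> (a,c) \<in> (del_arcs E Z)\<^sup>* \<and> (c,b) \<in> (del_arcs E Z)\<^sup>*"
  using assms
proof (induction rule: converse_rtrancl_induct)
  case base then show ?case by simp
next
  case (step a a')
  show ?case
  proof (cases "a' \<in> B")
    case True then show ?thesis using step(1,2) by (auto simp: del_arcs_def)
  next
    case False
    show ?thesis
    proof (cases "a \<in> B")
      case True then show ?thesis using step(1,2)
        by (auto simp: del_arcs_def intro: converse_rtrancl_into_rtrancl)
    next
      case False
      have arc: "(a,a') \<in> del_arcs E (Z \<union> B)" using step(1) False \<open>a' \<notin> B\<close>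
        by (auto simp: del_arcs_def)
      have "(a',b) \<notin> (del_arcs E (Z \<union> B))\<^sup>*"
        using step(4) arc by (meson converse_rtrancl_into_rtrancl)
      then obtain c where "c \<in> B" "c \<notin> Z" "(a',c) \<in> (del_arcs E Z)\<^sup>*" "(c,b) \<in> (del_arcs E Z)\<^sup>*"
        using step(3) by blast
      then show ?thesis using step(1) by (meson converse_rtrancl_into_rtrancl)
    qed
  qed
qed

lemma reach_notin:
  assumes "(a,v) \<in> (del_arcs F Z)\<^sup>*" "a \<notin> Z" shows "v \<notin> Z"
  using assms by (induction rule: rtrancl_induct) (auto simp: del_arcs_def)

lemma first_hit:
  assumes "(a,b) \<in> (del_arcs F Z')\<^sup>*" "a \<notin> Z"
  shows "(a,b) \<in> (del_arcs F Z)\<^sup>* \<or> (\<exists>u w. (a,u) \<in> (del_arcs F Z)\<^sup>* \<and> (u,w) \<in> F \<and> w \<in> Z \<and> w \<notin> Z')"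
  using assms(1)
proof (induction rule: rtrancl_induct)
  case base then show ?case by simp
next
  case (step c b)
  then show ?case
  proof (elim disjE)
    assume h: "(a,c) \<in> (del_arcs F Z)\<^sup>*"
    have "c \<notin> Z" using reach_notin[OF h assms(2)] .
    show ?thesis
    proof (cases "b \<in> Z")
      case True then show ?thesis using h step(2) by (auto simp: del_arcs_def)
    next
      case False
      then have "(c,b) \<in> del_arcs F Z" using \<open>c \<notin> Z\<close> step(2) by (auto simp: del_arcs_def)
      then show ?thesis using h by (meson rtrancl_into_rtrancl)
    qed
  qed simp
qed

lemma minimal_sep_reach:
  assumes "minimal_sep V E T {x} {y} Z" "v \<in> Z"
  shows "(x,v) \<in> E\<^sup>*"
proof -
  have sep: "is_sep V E T {x} {y} Z" using assms(1) by (simp add: minimal_sep_def)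
  have "\<not> is_sep V E T {x} {y} (Z - {v})" using assms unfolding minimal_sep_def by blast
  then have p: "(x,y) \<in> (del_arcs E (Z - {v}))\<^sup>*" using sep unfolding is_sep_def by auto
  have xz: "x \<notin> Z" and np: "(x,y) \<notin> (del_arcs E Z)\<^sup>*" using sep unfolding is_sep_def by auto
  from first_hit[OF p xz] np obtain u w where "(x,u) \<in> (del_arcs E Z)\<^sup>*" "(u,w) \<in> E" "w \<in> Z" "w \<notin> Z - {v}"
    by blast
  then show ?thesis using del_rtr_sub by (metis DiffI rtrancl.rtrancl_into_rtrancl singletonD)
qed

definition Nb :: "('a \<times> 'a) set \<Rightarrow> 'a set \<Rightarrow> 'a set" where
  "Nb F A = {v. v \<notin> A \<and> (\<exists>u\<in>A. (u,v) \<in> F)}"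

definition minsep :: "'a set \<Rightarrow> ('a \<times> 'a) set \<Rightarrow> 'a set \<Rightarrow> 'a \<Rightarrow> 'a \<Rightarrow> 'a set \<Rightarrow> bool" where
  "minsep V F T x y Z \<longleftrightarrow> is_sep V F T {x} {y} Z \<and> (\<forall>Z'. is_sep V F T {x} {y} Z' \<longrightarrow> card Z \<le> card Z')"

definition closest :: "'a set \<Rightarrow> ('a \<times> 'a) set \<Rightarrow> 'a set \<Rightarrow> 'a \<Rightarrow> 'a \<Rightarrow> 'a set \<Rightarrow> bool" where
  "closest V F T x y Z \<longleftrightarrow> minsep V F T x y Z \<and>
     (\<forall>Z'. minsep V F T x y Z' \<longrightarrow> reach_set F Z' {x} \<subseteq> reach_set F Z {x})"

lemma reach_disj: "is_sep V F T {x} {y} Z \<Longrightarrow> v \<in> reach_set F Z {x} \<Longrightarrow> v \<notin> Z"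
  unfolding reach_set_def is_sep_def using reach_notin by fastforce

lemma Nb_sub: assumes "is_sep V F T {x} {y} Z" shows "Nb F (reach_set F Z {x}) \<subseteq> Z"
proof
  fix v assume "v \<in> Nb F (reach_set F Z {x})"
  then obtain u where u: "u \<in> reach_set F Z {x}" "(u,v) \<in> F" "v \<notin> reach_set F Z {x}"
    unfolding Nb_def by blast
  have "u \<notin> Z" using reach_disj[OF assms u(1)] .
  show "v \<in> Z"
  proof (rule ccontr)
    assume "v \<notin> Z"
    then have "(u,v) \<in> del_arcs F Z" using \<open>u \<notin> Z\<close> u(2) by (auto simp: del_arcs_def)
    then have "v \<in> reach_set F Z {x}" using u(1) unfolding reach_set_def
      by (auto intro: rtrancl_into_rtrancl)
    then show False using u(3) by simp
  qed
qed

lemma Nb_sup: assumes "minimal_sep V F T {x} {y} Z" shows "Z \<subseteq> Nb F (reach_set F Z {x})"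
proof
  fix z assume zZ: "z \<in> Z"
  have sep: "is_sep V F T {x} {y} Z" using assms(1) by (simp add: minimal_sep_def)
  have "\<not> is_sep V F T {x} {y} (Z - {z})" using assms zZ unfolding minimal_sep_def by blast
  then have p: "(x,y) \<in> (del_arcs F (Z - {z}))\<^sup>*" using sep unfolding is_sep_def by auto
  have xz: "x \<notin> Z" and np: "(x,y) \<notin> (del_arcs F Z)\<^sup>*" using sep unfolding is_sep_def by auto
  from first_hit[OF p xz] np obtain u w where "(x,u) \<in> (del_arcs F Z)\<^sup>*" "(u,w) \<in> F" "w \<in> Z" "w \<notin> Z - {z}"
    by blast
  moreover have "z \<notin> reach_set F Z {x}" using reach_disj[OF sep] zZ by blast
  ultimately show "z \<in> Nb F (reach_set F Z {x})" unfolding Nb_def reach_set_def by auto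
qed

lemma minsep_minimal: "finite V \<Longrightarrow> minsep V F T x y Z \<Longrightarrow> minimal_sep V F T {x} {y} Z"
  unfolding minsep_def minimal_sep_def
  by (meson is_sep_def leD psubset_card_mono rev_finite_subset)

lemma minsep_eq: "finite V \<Longrightarrow> minsep V F T x y Z \<Longrightarrow> Z = Nb F (reach_set F Z {x})"
  using Nb_sub Nb_sup minsep_minimal minsep_def by (metis subset_antisym)

lemma reach_in_V: "F \<subseteq> V \<times> V \<Longrightarrow> x \<in> V \<Longrightarrow> reach_set F Z {x} \<subseteq> V"
proof
  fix v assume F: "F \<subseteq> V \<times> V" and x: "x \<in> V" and "v \<in> reach_set F Z {x}"
  then have "(x,v) \<in> (del_arcs F Z)\<^sup>*" unfolding reach_set_def by simp
  then show "v \<in> V" using x F del_arcs_sub[of F Z]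
    by (induction rule: rtrancl_induct) auto
qed

lemma sep_sub:
  assumes "is_sep V F T {x} {y} Z1" "is_sep V F T {x} {y} Z2" "Z \<subseteq> Z1 \<union> Z2"
    "\<And>w. (x,w) \<in> (del_arcs F Z)\<^sup>* \<Longrightarrow> w \<noteq> y"
  shows "is_sep V F T {x} {y} Z"
proof -
  have "Z \<subseteq> V" "Z \<inter> T = {}" "Z \<inter> ({x} \<union> {y}) = {}"
    using assms(1,2,3) unfolding is_sep_def by auto
  moreover have "(x,y) \<notin> (del_arcs F Z)\<^sup>*" using assms(4) by blast
  ultimately show ?thesis unfolding is_sep_def by blast
qed

lemma submod:
  assumes fin: "finite V" and FV: "F \<subseteq> V \<times> V" and xV: "x \<in> V"
    and m1: "minsep V F T x y Z1" and m2: "minsep V F T x y Z2"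
  defines "A \<equiv> reach_set F Z1 {x}" and "B \<equiv> reach_set F Z2 {x}"
  shows "minsep V F T x y (Nb F (A \<union> B)) \<and> A \<union> B \<subseteq> reach_set F (Nb F (A \<union> B)) {x}"
proof -
  define Z3 where "Z3 = Nb F (A \<union> B)"
  define Z4 where "Z4 = (Z1 \<inter> Z2) \<union> (Z1 \<inter> B) \<union> (Z2 \<inter> A)"
  have s1: "is_sep V F T {x} {y} Z1" and s2: "is_sep V F T {x} {y} Z2"
    using m1 m2 by (auto simp: minsep_def)
  have Z1A: "Z1 = Nb F A" using minsep_eq[OF fin m1] A_def by simp
  have Z2B: "Z2 = Nb F B" using minsep_eq[OF fin m2] B_def by simp
  have xA: "x \<in> A" and xB: "x \<in> B" by (auto simp: A_def B_def reach_set_def)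
  have yA: "y \<notin> A" using s1 by (auto simp: A_def reach_set_def is_sep_def)
  have yB: "y \<notin> B" using s2 by (auto simp: B_def reach_set_def is_sep_def)
  have Z1Adisj: "Z1 \<inter> A = {}" using Z1A by (auto simp: Nb_def)
  have Z2Bdisj: "Z2 \<inter> B = {}" using Z2B by (auto simp: Nb_def)
  have Z3sub: "Z3 \<subseteq> Z1 \<union> Z2" unfolding Z3_def Z1A Z2B Nb_def by auto
  have Z3disj: "Z3 \<inter> (A \<union> B) = {}" unfolding Z3_def Nb_def by auto
  have Z4sub: "Z4 \<subseteq> Z1 \<union> Z2" unfolding Z4_def by auto
  have finZ1: "finite Z1" and finZ2: "finite Z2" using s1 s2 fin
    by (auto simp: is_sep_def intro: rev_finite_subset)
  have stay3: "w \<in> A \<union> B" if "(x,w) \<in> (del_arcs F Z3)\<^sup>*" for w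
    using that
  proof (induction rule: rtrancl_induct)
    case base then show ?case using xA by simp
  next
    case (step u w)
    then show ?case unfolding Z3_def Nb_def del_arcs_def by auto
  qed
  have sep3: "is_sep V F T {x} {y} Z3"
    using sep_sub[OF s1 s2 Z3sub] stay3 yA yB by blast
  have stay4: "w \<in> A \<and> w \<in> B" if "(x,w) \<in> (del_arcs F Z4)\<^sup>*" for w
    using that
  proof (induction rule: rtrancl_induct)
    case base then show ?case using xA xB by simp
  next
    case (step u w)
    then have uw: "(u,w) \<in> F" "w \<notin> Z4" "u \<in> A" "u \<in> B" by (auto simp: del_arcs_def)
    have wA: "w \<in> A"
    proof (rule ccontr)
      assume nA: "w \<notin> A"
      then have "w \<in> Z1" using uw Z1A by (auto simp: Nb_def)
      then show False using uw Z2B nA unfolding Z4_def Nb_def by auto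
    qed
    have wB: "w \<in> B"
    proof (rule ccontr)
      assume nB: "w \<notin> B"
      then have "w \<in> Z2" using uw Z2B by (auto simp: Nb_def)
      then show False using uw Z1A nB unfolding Z4_def Nb_def by auto
    qed
    show ?case using wA wB by simp
  qed
  have sep4: "is_sep V F T {x} {y} Z4"
    using sep_sub[OF s1 s2 Z4sub] stay4 yA by blast
  have c12: "card Z1 = card Z2" using m1 m2 s1 s2 unfolding minsep_def by (meson le_antisym)
  have c4: "card Z1 \<le> card Z4" using m1 sep4 by (simp add: minsep_def)
  define P where "P = Z1 - B"
  define Q where "Q = Z2 - A"
  have finP: "finite P" "finite Q" using finZ1 finZ2 by (auto simp: P_def Q_def)
  have "Z3 \<subseteq> P \<union> Q" unfolding Z3_def P_def Q_def Z1A Z2B Nb_def by auto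
  then have a: "card Z3 \<le> card (P \<union> Q)" using finP by (simp add: card_mono)
  have "Z1 \<inter> Z2 \<subseteq> P \<inter> Q" using Z1Adisj Z2Bdisj unfolding P_def Q_def by auto
  then have b: "card (Z1 \<inter> Z2) \<le> card (P \<inter> Q)" using finP by (simp add: card_mono)
  have c: "card (P \<union> Q) + card (P \<inter> Q) = card P + card Q" using card_Un_Int[OF finP] by simp
  have d: "card Z4 \<le> card (Z1 \<inter> Z2) + card (Z1 \<inter> B) + card (Z2 \<inter> A)"
  proof -
    have "card Z4 \<le> card ((Z1 \<inter> Z2) \<union> (Z1 \<inter> B)) + card (Z2 \<inter> A)"
      unfolding Z4_def by (rule card_Un_le)
    moreover have "card ((Z1 \<inter> Z2) \<union> (Z1 \<inter> B)) \<le> card (Z1 \<inter> Z2) + card (Z1 \<inter> B)"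
      by (rule card_Un_le)
    ultimately show ?thesis by linarith
  qed
  have e: "card Z1 = card (Z1 \<inter> B) + card P" "card Z2 = card (Z2 \<inter> A) + card Q"
    using card_Int_Diff finZ1 finZ2 unfolding P_def Q_def by auto
  have "card Z3 \<le> card Z1" using a b c d e c4 c12 by linarith
  then have ms3: "minsep V F T x y Z3" using sep3 m1 unfolding minsep_def by (meson le_trans)
  have incl: "(x,w) \<in> (del_arcs F Z3)\<^sup>*" if "(x,w) \<in> (del_arcs F Z)\<^sup>*" "reach_set F Z {x} \<subseteq> A \<union> B" for w Z
    using that(1)
  proof (induction rule: rtrancl_induct)
    case base then show ?case by simp
  next
    case (step u w)
    have "u \<in> A \<union> B" "w \<in> A \<union> B" using that(2) step(1,2)
      by (auto simp: reach_set_def intro: rtrancl_into_rtrancl)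
    then have "(u,w) \<in> del_arcs F Z3" using step(2) Z3disj by (auto simp: del_arcs_def)
    then show ?case using step(3) by (meson rtrancl_into_rtrancl)
  qed
  have "A \<subseteq> reach_set F Z3 {x}" using incl[of _ Z1] unfolding A_def
    by (auto simp: reach_set_def)
  moreover have "B \<subseteq> reach_set F Z3 {x}" using incl[of _ Z2] unfolding B_def
    by (auto simp: reach_set_def)
  ultimately show ?thesis using ms3 Z3_def by auto
qed

lemma closest_exists:
  assumes fin: "finite V" and FV: "F \<subseteq> V \<times> V" and xV: "x \<in> V"
    and ex: "\<exists>Z. is_sep V F T {x} {y} Z"
  shows "\<exists>Z. closest V F T x y Z"
proof -
  obtain Z0 where Z0: "is_sep V F T {x} {y} Z0" using ex by blast
  obtain Zm where Zm: "is_sep V F T {x} {y} Zm" "\<forall>Z'. is_sep V F T {x} {y} Z' \<longrightarrow> card Zm \<le> card Z'"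
    using ex_has_least_nat[of "is_sep V F T {x} {y}" Z0 card] Z0 by blast
  then have "minsep V F T x y Zm" by (simp add: minsep_def)
  then obtain Z where Z: "minsep V F T x y Z"
    "\<forall>Z'. minsep V F T x y Z' \<longrightarrow> card V - card (reach_set F Z {x}) \<le> card V - card (reach_set F Z' {x})"
    using ex_has_least_nat[of "minsep V F T x y" Zm "\<lambda>Z. card V - card (reach_set F Z {x})"] by blast
  have "reach_set F Z' {x} \<subseteq> reach_set F Z {x}" if m': "minsep V F T x y Z'" for Z'
  proof -
    define Z3 where "Z3 = Nb F (reach_set F Z {x} \<union> reach_set F Z' {x})"
    have m3: "minsep V F T x y Z3" and inc: "reach_set F Z {x} \<union> reach_set F Z' {x} \<subseteq> reach_set F Z3 {x}"
      using submod[OF fin FV xV Z(1) m'] Z3_def by auto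
    have f3: "finite (reach_set F Z3 {x})" and c3: "card (reach_set F Z3 {x}) \<le> card V"
      using reach_in_V[OF FV xV] fin by (auto intro: rev_finite_subset card_mono)
    have "card V - card (reach_set F Z {x}) \<le> card V - card (reach_set F Z3 {x})" using Z(2) m3 by blast
    moreover have "card (reach_set F Z {x}) \<le> card V"
      using reach_in_V[OF FV xV] fin by (auto intro: card_mono)
    ultimately have "card (reach_set F Z3 {x}) \<le> card (reach_set F Z {x})" using c3 by linarith
    then have "reach_set F Z {x} = reach_set F Z3 {x}" using card_seteq[OF f3] inc by blast
    then show ?thesis using inc by blast
  qed
  then show ?thesis using Z(1) unfolding closest_def by blast
qed

lemma closest_unique:
  assumes fin: "finite V" and c1: "closest V F T x y Z1" and c2: "closest V F T x y Z2"
  shows "Z1 = Z2"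
proof -
  have "reach_set F Z1 {x} = reach_set F Z2 {x}" using c1 c2 unfolding closest_def by blast
  then show ?thesis using minsep_eq[OF fin] c1 c2 unfolding closest_def by metis
qed

lemma closest_mincut:
  assumes fin: "finite V" and c: "closest V F T x y Z"
  shows "mincut_closest_to_Y V F T {x} {y} Z"
proof -
  have m: "minsep V F T x y Z" using c by (simp add: closest_def)
  have sep: "is_sep V F T {x} {y} Z" using m by (simp add: minsep_def)
  have ms: "minimal_sep V F T {x} {y} Z" using minsep_minimal[OF fin m] .
  have noZ': "\<not> (\<exists>Z'. Z' \<noteq> Z \<and> is_sep V F T {x} {y} Z' \<and> card Z' \<le> card Z \<and>
            reach_set F Z {x} \<subseteq> reach_set F Z' {x})"
  proof
    assume "\<exists>Z'. Z' \<noteq> Z \<and> is_sep V F T {x} {y} Z' \<and> card Z' \<le> card Z \<and>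
            reach_set F Z {x} \<subseteq> reach_set F Z' {x}"
    then obtain Z' where Z': "Z' \<noteq> Z" "is_sep V F T {x} {y} Z'" "card Z' \<le> card Z"
      "reach_set F Z {x} \<subseteq> reach_set F Z' {x}" by blast
    have m': "minsep V F T x y Z'" using Z' m unfolding minsep_def by (meson le_trans)
    then have "reach_set F Z' {x} \<subseteq> reach_set F Z {x}" using c unfolding closest_def by blast
    then have "reach_set F Z' {x} = reach_set F Z {x}" using Z'(4) by blast
    then have "Z' = Z" using minsep_eq[OF fin m] minsep_eq[OF fin m'] by metis
    then show False using Z'(1) by simp
  qed
  have "important_sep V F T {x} {y} Z" unfolding important_sep_def using ms noZ' by blast
  moreover have "\<forall>Z'. important_sep V F T {x} {y} Z' \<longrightarrow> card Z \<le> card Z'"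
    using m unfolding important_sep_def minimal_sep_def minsep_def by blast
  ultimately show ?thesis unfolding mincut_closest_to_Y_def by blast
qed

lemma mincut_closest:
  assumes fin: "finite V" and FV: "F \<subseteq> V \<times> V" and xV: "x \<in> V"
    and ex: "\<exists>Z. is_sep V F T {x} {y} Z"
    and mc: "mincut_closest_to_Y V F T {x} {y} Z"
  shows "closest V F T x y Z"
proof -
  obtain Z0 where c0: "closest V F T x y Z0" using closest_exists[OF fin FV xV ex] by blast
  have mc0: "mincut_closest_to_Y V F T {x} {y} Z0" using closest_mincut[OF fin c0] .
  have m0: "minsep V F T x y Z0" using c0 by (simp add: closest_def)
  have imp: "important_sep V F T {x} {y} Z" using mc by (simp add: mincut_closest_to_Y_def)
  have sep: "is_sep V F T {x} {y} Z" using imp by (simp add: important_sep_def minimal_sep_def)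
  have "card Z \<le> card Z0" using mc mc0 unfolding mincut_closest_to_Y_def by blast
  then have m: "minsep V F T x y Z" using m0 sep unfolding minsep_def by (meson le_trans)
  then have r: "reach_set F Z {x} \<subseteq> reach_set F Z0 {x}" using c0 unfolding closest_def by blast
  have "card Z0 \<le> card Z" using m0 sep unfolding minsep_def by blast
  then have "Z0 = Z" using imp r m0 unfolding important_sep_def minsep_def by blast
  then show ?thesis using c0 by simp
qed

lemma the_closest:
  assumes fin: "finite V" and FV: "F \<subseteq> V \<times> V" and xV: "x \<in> V"
    and ex: "\<exists>Z. is_sep V F T {x} {y} Z"
  shows "closest V F T x y (THE Z. mincut_closest_to_Y V F T {x} {y} Z)"
proof -
  obtain Z0 where c0: "closest V F T x y Z0" using closest_exists[OF fin FV xV ex] by blast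
  have "\<exists>!Z. mincut_closest_to_Y V F T {x} {y} Z"
  proof
    show "mincut_closest_to_Y V F T {x} {y} Z0" using closest_mincut[OF fin c0] .
  next
    fix Z assume "mincut_closest_to_Y V F T {x} {y} Z"
    then have "closest V F T x y Z" using mincut_closest[OF fin FV xV ex] by blast
    then show "Z = Z0" using closest_unique[OF fin _ c0] by blast
  qed
  then have "mincut_closest_to_Y V F T {x} {y} (THE Z. mincut_closest_to_Y V F T {x} {y} Z)"
    by (rule theI')
  then show ?thesis using mincut_closest[OF fin FV xV ex] by blast
qed

lemma minsep_cut: "minsep V F T x y Z \<Longrightarrow> cut V F T {x} {y} = enat (card Z)"
  unfolding cut_def minsep_def
  by (rule antisym) (auto intro!: INF_lower INF_greatest)

lemma cut_ex: "cut V F T {x} {y} \<le> enat p \<Longrightarrow> \<exists>Z. is_sep V F T {x} {y} Z"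
  unfolding cut_def by (cases "{Z. is_sep V F T {x} {y} Z} = {}") (auto simp: top_enat_def)




locale dmc =
  fixes V :: "'a set" and E :: "('a \<times> 'a) set" and r p :: nat and s t :: "nat \<Rightarrow> 'a"
  assumes inst: "dag_mc_instance V E r s t p"
begin

abbreviation "TT \<equiv> terminals r s t"
abbreviation "SS \<equiv> s ` idx r"
abbreviation "BB \<equiv> Bset V E r s t"
abbreviation "GS \<equiv> reduced_arcs V E r s t"

lemma finV: "finite V" using inst unfolding dag_mc_instance_def by blast
lemma EV: "E \<subseteq> V \<times> V" using inst unfolding dag_mc_instance_def by blast
lemma sV: "i \<in> idx r \<Longrightarrow> s i \<in> V" using inst unfolding dag_mc_instance_def by blast
lemma tV: "i \<in> idx r \<Longrightarrow> t i \<in> V" using inst unfolding dag_mc_instance_def by blast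
lemma sinj: "inj_on s (idx r)" using inst unfolding dag_mc_instance_def by blast
lemma st: "i \<in> idx r \<Longrightarrow> j \<in> idx r \<Longrightarrow> s i \<noteq> t j"
proof
  assume "i \<in> idx r" "j \<in> idx r" "s i = t j"
  then have "s i \<in> s ` idx r \<inter> t ` idx r" by force
  then show False using inst unfolding dag_mc_instance_def by blast
qed
lemma noin: "i \<in> idx r \<Longrightarrow> (u, s i) \<notin> E" using inst unfolding dag_mc_instance_def by blast
lemma cutp: "i \<in> idx r \<Longrightarrow> cut V E TT {s i} {t i} \<le> enat p"
  using inst unfolding dag_mc_instance_def by blast

lemma sT: "i \<in> idx r \<Longrightarrow> s i \<in> TT" and tT: "i \<in> idx r \<Longrightarrow> t i \<in> TT"
  by (auto simp: terminals_def)

lemma B_closest: assumes i: "i \<in> idx r" shows "closest V (E\<inverse>) TT (t i) (s i) (BB i)"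
proof -
  have ex: "\<exists>Z. is_sep V (E\<inverse>) TT {t i} {s i} Z"
    using cut_ex[of V "E\<inverse>" TT "t i" "s i" p] cutp[OF i] by (simp add: cut_conv)
  have "BB i = (THE Z. mincut_closest_to_Y V (E\<inverse>) TT {t i} {s i} Z)"
    by (simp add: Bset_def mincut_closest_to_X_def)
  moreover have "E\<inverse> \<subseteq> V \<times> V" using EV by blast
  ultimately show ?thesis using the_closest[OF finV _ tV[OF i] ex] by simp
qed

lemma B_minsep: "i \<in> idx r \<Longrightarrow> minsep V (E\<inverse>) TT (t i) (s i) (BB i)"
  using B_closest unfolding closest_def by blast

lemma B_sep: assumes i: "i \<in> idx r" shows "is_sep V E TT {s i} {t i} (BB i)"
proof -
  have "is_sep V (E\<inverse>) TT {t i} {s i} (BB i)" using B_minsep[OF i] by (simp add: minsep_def)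
  then show ?thesis by (simp add: is_sep_conv)
qed

lemma B_min: assumes i: "i \<in> idx r" and Z: "is_sep V E TT {s i} {t i} Z" shows "card (BB i) \<le> card Z"
proof -
  have "is_sep V (E\<inverse>) TT {t i} {s i} Z" using Z by (simp add: is_sep_conv)
  then show ?thesis using B_minsep[OF i] unfolding minsep_def by blast
qed

lemma BV: "i \<in> idx r \<Longrightarrow> BB i \<subseteq> V"
  using B_sep unfolding is_sep_def by blast
lemma BT: "i \<in> idx r \<Longrightarrow> BB i \<inter> TT = {}"
  using B_sep unfolding is_sep_def by blast

lemma B_notS: "i \<in> idx r \<Longrightarrow> v \<in> BB i \<Longrightarrow> v \<notin> SS"
  using BT by (auto simp: terminals_def)

lemma B_card: "i \<in> idx r \<Longrightarrow> card (BB i) \<le> p"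
proof -
  assume i: "i \<in> idx r"
  have "cut V E TT {s i} {t i} = enat (card (BB i))"
    using minsep_cut[OF B_minsep[OF i]] by (simp add: cut_conv)
  then show ?thesis using cutp[OF i] by simp
qed

lemma B_reach: "i \<in> idx r \<Longrightarrow> v \<in> BB i \<Longrightarrow> (s i, v) \<in> E\<^sup>*"
proof -
  assume i: "i \<in> idx r" and v: "v \<in> BB i"
  have "minimal_sep V E TT {s i} {t i} (BB i)"
    using minsep_minimal[OF finV B_minsep[OF i]] by (simp add: minimal_sep_def is_sep_conv)
  then show ?thesis using minimal_sep_reach[OF _ v] by blast
qed

lemma src_reach: "x \<in> src_set E r s v \<Longrightarrow> (x, v) \<in> E\<^sup>*"
  unfolding src_set_def by auto

lemma Es_cases:
  assumes "(u,v) \<in> GS"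
  obtains (a) "(u,v) \<in> E" "u \<notin> SS" "v \<notin> SS"
   | (b) i where "i \<in> idx r" "u = s i" "v \<in> BB i"
   | (c) i j where "i \<in> idx r" "u = s i" "j \<in> idx r" "v \<in> BB j" "(s i, v) \<in> E\<^sup>*"
        "\<not> (\<exists>b\<in>BB i. (b,v) \<in> E\<^sup>*)"
proof -
  have "((u,v) \<in> E \<and> u \<notin> SS \<and> v \<notin> SS) \<or> (\<exists>i. i \<in> idx r \<and> u = s i \<and> v \<in> BB i) \<or>
    (\<exists>i. i \<in> idx r \<and> u = s i \<and> v \<in> (\<Union>i'\<in>idx r. BB i') \<and> s i \<in> src_set E r s v \<and>
          \<not> (\<exists>b\<in>BB i. (b, v) \<in> E\<^sup>*))"
    using assms unfolding reduced_arcs_def by blast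
  then show ?thesis
  proof (elim disjE exE conjE)
    assume "(u,v) \<in> E" "u \<notin> SS" "v \<notin> SS" then show ?thesis by (rule a)
  next
    fix i assume "i \<in> idx r" "u = s i" "v \<in> BB i" then show ?thesis by (rule b)
  next
    fix i assume h: "i \<in> idx r" "u = s i" "v \<in> (\<Union>i'\<in>idx r. BB i')" "s i \<in> src_set E r s v"
          "\<not> (\<exists>b\<in>BB i. (b, v) \<in> E\<^sup>*)"
    from h(3) obtain j where "j \<in> idx r" "v \<in> BB j" by blast
    then show ?thesis using c[OF h(1,2)] h(4,5) src_reach by blast
  qed
qed

lemma Es_target: assumes "(u,v) \<in> GS" shows "v \<notin> SS"
  using assms by (cases rule: Es_cases) (auto dest: B_notS)

lemma E_target: "(u,v) \<in> E \<Longrightarrow> v \<notin> SS"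
  using noin by blast

lemma Es_nonsrc: assumes "(u,v) \<in> GS" "u \<notin> SS" shows "(u,v) \<in> E"
  using assms(1) by (cases rule: Es_cases) (use assms(2) in auto)

lemma E_Es: assumes "(u,v) \<in> E" "u \<notin> SS" shows "(u,v) \<in> GS"
proof -
  have "v \<notin> SS" using E_target[OF assms(1)] .
  then show ?thesis using assms unfolding reduced_arcs_def by blast
qed

lemma Es_src: "i \<in> idx r \<Longrightarrow> v \<in> BB i \<Longrightarrow> (s i, v) \<in> GS"
  unfolding reduced_arcs_def by blast

lemma Es_src3: assumes "i \<in> idx r" "v \<in> (\<Union>i'\<in>idx r. BB i')" "(s i, v) \<in> E\<^sup>*"
   "\<not> (\<exists>b\<in>BB i. (b,v) \<in> E\<^sup>*)" shows "(s i, v) \<in> GS"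
proof -
  have "s i \<in> src_set E r s v" using assms(1,3) unfolding src_set_def by blast
  then show ?thesis using assms unfolding reduced_arcs_def by blast
qed

lemma Es_V: assumes "(u,v) \<in> GS" shows "u \<in> V \<and> v \<in> V"
  using assms by (cases rule: Es_cases) (use EV BV sV in blast)+

lemma Es_VV: "GS \<subseteq> V \<times> V" using Es_V by auto

lemma RE1: "(u,w) \<in> (del_arcs GS Z)\<^sup>* \<Longrightarrow> u \<notin> SS \<Longrightarrow> (u,w) \<in> (del_arcs E Z)\<^sup>* \<and> w \<notin> SS"
proof (induction rule: rtrancl_induct)
  case base then show ?case by simp
next
  case (step c w)
  have cw: "(c,w) \<in> GS" "c \<notin> Z" "w \<notin> Z" using step(2) unfolding del_arcs_def by auto
  have "c \<notin> SS" using step by blast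
  then have "(c,w) \<in> del_arcs E Z" "w \<notin> SS"
    using Es_nonsrc[OF cw(1)] Es_target[OF cw(1)] cw unfolding del_arcs_def by auto
  then show ?case using step by (meson rtrancl_into_rtrancl)
qed

lemma RE2: "(u,w) \<in> (del_arcs E Z)\<^sup>* \<Longrightarrow> u \<notin> SS \<Longrightarrow> (u,w) \<in> (del_arcs GS Z)\<^sup>* \<and> w \<notin> SS"
proof (induction rule: rtrancl_induct)
  case base then show ?case by simp
next
  case (step c w)
  have cw: "(c,w) \<in> E" "c \<notin> Z" "w \<notin> Z" using step(2) unfolding del_arcs_def by auto
  have "c \<notin> SS" using step by blast
  then have "(c,w) \<in> del_arcs GS Z" "w \<notin> SS"
    using E_Es[OF cw(1)] E_target[OF cw(1)] cw unfolding del_arcs_def by auto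
  then show ?case using step by (meson rtrancl_into_rtrancl)
qed

lemma RE: "u \<notin> SS \<Longrightarrow> ((u,w) \<in> (del_arcs GS Z)\<^sup>*) = ((u,w) \<in> (del_arcs E Z)\<^sup>*)"
  using RE1 RE2 by blast

lemma SSt:
  assumes i: "i \<in> idx r" and p: "(s i, w) \<in> (del_arcs GS Z)\<^sup>*" and ne: "w \<noteq> s i"
  shows "\<exists>v. (s i, v) \<in> GS \<and> v \<notin> Z \<and> s i \<notin> Z \<and> (v,w) \<in> (del_arcs E Z)\<^sup>*"
proof -
  from p ne obtain v where v1: "(s i, v) \<in> del_arcs GS Z" and v2: "(v,w) \<in> (del_arcs GS Z)\<^sup>*"
    by (metis converse_rtranclE)
  have a: "(s i, v) \<in> GS" "s i \<notin> Z" "v \<notin> Z" using v1 unfolding del_arcs_def by auto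
  have "v \<notin> SS" using Es_target[OF a(1)] .
  then have "(v,w) \<in> (del_arcs E Z)\<^sup>*" using RE1[OF v2] by blast
  then show ?thesis using a by blast
qed

lemma G_to_Gs:
  assumes i: "i \<in> idx r" and sZ: "s i \<notin> Z" and p: "(s i, t i) \<in> (del_arcs E Z)\<^sup>*"
  shows "(s i, t i) \<in> (del_arcs GS Z)\<^sup>*"
proof -
  have n1: "(s i, t i) \<notin> (del_arcs E (BB i))\<^sup>*" using B_sep[OF i] unfolding is_sep_def by blast
  have "(s i, t i) \<notin> (del_arcs E (Z \<union> BB i))\<^sup>*"
  proof
    assume "(s i, t i) \<in> (del_arcs E (Z \<union> BB i))\<^sup>*"
    then have "(s i, t i) \<in> (del_arcs E (BB i))\<^sup>*" by (rule del_rtr_anti) blast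
    then show False using n1 by contradiction
  qed
  then obtain c where c: "c \<in> BB i" "c \<notin> Z" "(c, t i) \<in> (del_arcs E Z)\<^sup>*"
    using path_hits[OF p] by blast
  have "(s i, c) \<in> del_arcs GS Z" using Es_src[OF i c(1)] sZ c(2) by (auto simp: del_arcs_def)
  moreover have "(c, t i) \<in> (del_arcs GS Z)\<^sup>*" using RE2[OF c(3) B_notS[OF i c(1)]] by blast
  ultimately show ?thesis by (meson converse_rtrancl_into_rtrancl)
qed

lemma same_idx: "i \<in> idx r \<Longrightarrow> j \<in> idx r \<Longrightarrow> s j = s i \<Longrightarrow> j = i"
  using sinj by (meson inj_onD)

lemma out_sub: "out_nbh GS SS \<subseteq> (\<Union>i\<in>idx r. BB i)"
proof
  fix v assume "v \<in> out_nbh GS SS"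
  then obtain y where y: "y \<in> SS" "(y,v) \<in> GS" unfolding out_nbh_def by blast
  from y(2) show "v \<in> (\<Union>i\<in>idx r. BB i)"
  proof (cases rule: Es_cases)
    case a then show ?thesis using y(1) by blast
  next
    case (b j) then show ?thesis by blast
  next
    case (c j k) then show ?thesis by blast
  qed
qed

lemma part1: "card (out_nbh GS SS) \<le> r * p"
proof -
  have "(\<Union>i\<in>idx r. BB i) \<subseteq> V" using BV by blast
  then have fin: "finite (\<Union>i\<in>idx r. BB i)" using finV by (rule finite_subset)
  have "card (out_nbh GS SS) \<le> card (\<Union>i\<in>idx r. BB i)" using card_mono[OF fin out_sub] .
  also have "\<dots> \<le> (\<Sum>i\<in>idx r. card (BB i))" by (rule card_UN_le) (simp add: idx_def)
  also have "\<dots> \<le> (\<Sum>i\<in>idx r. p)" by (rule sum_mono) (rule B_card)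
  also have "\<dots> = r * p" by (simp add: idx_def)
  finally show ?thesis .
qed

lemma avoid_B:
  assumes i: "i \<in> idx r" and p: "(s i, w) \<in> E\<^sup>*" and n: "\<not> (\<exists>b\<in>BB i. (b,w) \<in> E\<^sup>*)"
  shows "(s i, w) \<in> (del_arcs E (BB i))\<^sup>*"
proof (rule ccontr)
  assume nn: "(s i, w) \<notin> (del_arcs E (BB i))\<^sup>*"
  have p': "(s i, w) \<in> (del_arcs E {})\<^sup>*" using p by simp
  have "(s i, w) \<notin> (del_arcs E ({} \<union> BB i))\<^sup>*" using nn by simp
  then obtain c where "c \<in> BB i" "(c, w) \<in> (del_arcs E {})\<^sup>*"
    using path_hits[OF p'] by blast
  then show False using n by auto
qed

lemma sepEs_B: assumes i: "i \<in> idx r" shows "is_sep V GS TT {s i} {t i} (BB i)"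
proof -
  have b: "is_sep V E TT {s i} {t i} (BB i)" using B_sep[OF i] .
  have n1: "(s i, t i) \<notin> (del_arcs E (BB i))\<^sup>*" using b unfolding is_sep_def by blast
  have "(s i, t i) \<notin> (del_arcs GS (BB i))\<^sup>*"
  proof
    assume p: "(s i, t i) \<in> (del_arcs GS (BB i))\<^sup>*"
    have ne: "t i \<noteq> s i" using st[OF i i] by simp
    obtain v where v: "(s i, v) \<in> GS" "v \<notin> BB i" "(v, t i) \<in> (del_arcs E (BB i))\<^sup>*"
      using SSt[OF i p ne] by blast
    from v(1) show False
    proof (cases rule: Es_cases)
      case a then show ?thesis using i by blast
    next
      case (b j) then have "j = i" using same_idx[OF i] by metis
      then show ?thesis using b(3) v(2) by blast
    next
      case (c j k)
      then have ji: "j = i" using same_idx[OF i] by metis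
      have "(s i, v) \<in> (del_arcs E (BB i))\<^sup>*" using avoid_B[OF c(1) c(5) c(6)] ji by simp
      then have "(s i, t i) \<in> (del_arcs E (BB i))\<^sup>*" using v(3) by (rule rtrancl_trans)
      then show False using n1 by contradiction
    qed
  qed
  then show ?thesis using b unfolding is_sep_def by auto
qed

lemma sepEs_sepE: assumes i: "i \<in> idx r" and Z: "is_sep V GS TT {s i} {t i} Z"
  shows "is_sep V E TT {s i} {t i} Z"
proof -
  have sZ: "s i \<notin> Z" using Z unfolding is_sep_def by auto
  have "(s i, t i) \<notin> (del_arcs GS Z)\<^sup>*" using Z unfolding is_sep_def by auto
  then have "(s i, t i) \<notin> (del_arcs E Z)\<^sup>*" using G_to_Gs[OF i sZ] by blast
  then show ?thesis using Z unfolding is_sep_def by auto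
qed

lemma BEs_minsep: assumes i: "i \<in> idx r" shows "minsep V (GS\<inverse>) TT (t i) (s i) (BB i)"
  unfolding minsep_def is_sep_conv
proof (intro conjI allI impI)
  show "is_sep V GS TT {s i} {t i} (BB i)" using sepEs_B[OF i] .
  fix Z' assume "is_sep V GS TT {s i} {t i} Z'"
  then show "card (BB i) \<le> card Z'" using B_min[OF i] sepEs_sepE[OF i] by blast
qed

lemma BEs_closest: assumes i: "i \<in> idx r" shows "closest V (GS\<inverse>) TT (t i) (s i) (BB i)"
  unfolding closest_def
proof (intro conjI allI impI)
  show "minsep V (GS\<inverse>) TT (t i) (s i) (BB i)" using BEs_minsep[OF i] .
  fix Z' assume m': "minsep V (GS\<inverse>) TT (t i) (s i) Z'"
  have sZ': "is_sep V GS TT {s i} {t i} Z'" using m' by (simp add: minsep_def is_sep_conv)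
  have sE: "is_sep V E TT {s i} {t i} Z'" using sepEs_sepE[OF i sZ'] .
  have "card Z' \<le> card (BB i)" using m' sepEs_B[OF i] by (simp add: minsep_def is_sep_conv)
  then have mE: "minsep V (E\<inverse>) TT (t i) (s i) Z'"
    using B_min[OF i] sE unfolding minsep_def is_sep_conv by (meson le_trans)
  then have RR: "reach_set (E\<inverse>) Z' {t i} \<subseteq> reach_set (E\<inverse>) (BB i) {t i}"
    using B_closest[OF i] unfolding closest_def by blast
  have key: "(w, t i) \<in> (del_arcs E (BB i))\<^sup>*" if "(w, t i) \<in> (del_arcs E Z')\<^sup>*" for w
    using RR that by (simp add: subset_iff reach_conv)
  have sepB': "is_sep V (E\<inverse>) TT {t i} {s i} (BB i)" using B_sep[OF i] by (simp add: is_sep_conv)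
  show "reach_set (GS\<inverse>) Z' {t i} \<subseteq> reach_set (GS\<inverse>) (BB i) {t i}"
  proof
    fix v assume "v \<in> reach_set (GS\<inverse>) Z' {t i}"
    then have pv: "(v, t i) \<in> (del_arcs GS Z')\<^sup>*" by (simp add: reach_conv)
    show "v \<in> reach_set (GS\<inverse>) (BB i) {t i}"
    proof (cases "v \<in> SS")
      case False
      then have "(v, t i) \<in> (del_arcs E Z')\<^sup>*" using RE1[OF pv] by blast
      then have "(v, t i) \<in> (del_arcs E (BB i))\<^sup>*" by (rule key)
      then have "(v, t i) \<in> (del_arcs GS (BB i))\<^sup>*" using RE2 False by blast
      then show ?thesis by (simp add: reach_conv)
    next
      case True
      then obtain j where j: "j \<in> idx r" "v = s j" by blast
      have ne: "t i \<noteq> s j" using st[OF j(1) i] by simp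
      have pv': "(s j, t i) \<in> (del_arcs GS Z')\<^sup>*" using pv j(2) by simp
      obtain w where w: "(s j, w) \<in> GS" "(w, t i) \<in> (del_arcs E Z')\<^sup>*"
        using SSt[OF j(1) pv' ne] by blast
      have wB: "(w, t i) \<in> (del_arcs E (BB i))\<^sup>*" using key[OF w(2)] .
      then have "w \<in> reach_set (E\<inverse>) (BB i) {t i}" by (simp add: reach_conv)
      then have wnB: "w \<notin> BB i" using reach_disj[OF sepB'] by blast
      have snB: "s j \<notin> BB i" using BT[OF i] sT[OF j(1)] by blast
      have "w \<notin> SS" using Es_target[OF w(1)] .
      then have "(w, t i) \<in> (del_arcs GS (BB i))\<^sup>*" using RE2[OF wB] by blast
      moreover have "(s j, w) \<in> del_arcs GS (BB i)" using w(1) wnB snB unfolding del_arcs_def by blast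
      ultimately have "(s j, t i) \<in> (del_arcs GS (BB i))\<^sup>*" by (meson converse_rtrancl_into_rtrancl)
      then show ?thesis using j by (simp add: reach_conv)
    qed
  qed
qed

lemma part2: "i \<in> idx r \<Longrightarrow> mincut_closest_to_X V GS TT {s i} {t i} (BB i)"
  unfolding mincut_closest_to_X_def using closest_mincut[OF finV BEs_closest] by blast

lemma cut_eq: assumes i: "i \<in> idx r" shows "cut V GS TT {s i} {t i} = cut V E TT {s i} {t i}"
proof -
  have "cut V GS TT {s i} {t i} = enat (card (BB i))"
    using minsep_cut[OF BEs_minsep[OF i]] by (simp add: cut_conv)
  moreover have "cut V E TT {s i} {t i} = enat (card (BB i))"
    using minsep_cut[OF B_minsep[OF i]] by (simp add: cut_conv)
  ultimately show ?thesis by simp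
qed

lemma part3: "potential V GS r s t p = potential V E r s t p"
  unfolding potential_def using cut_eq by (simp cong: sum.cong)

lemma mc_fwd:
  assumes mc: "multicut V GS r s t Z"
  shows "multicut V E r s t Z \<and> (\<forall>i\<in>idx r. \<forall>v\<in>BB i. v \<in> Z \<or> is_sep V E TT {v} {t i} Z)"
proof -
  have ZV: "Z \<subseteq> V" and ZT: "Z \<inter> TT = {}" using mc unfolding multicut_def by auto
  have np: "(s i, t i) \<notin> (del_arcs GS Z)\<^sup>*" if "i \<in> idx r" for i using mc that unfolding multicut_def by blast
  have sZ: "s i \<notin> Z" if "i \<in> idx r" for i using ZT sT[OF that] by blast
  have tZ: "t i \<notin> Z" if "i \<in> idx r" for i using ZT tT[OF that] by blast
  have "(s i, t i) \<notin> (del_arcs E Z)\<^sup>*" if i: "i \<in> idx r" for i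
    using G_to_Gs[OF i sZ[OF i]] np[OF i] by blast
  then have m1: "multicut V E r s t Z" using ZV ZT unfolding multicut_def by blast
  have "v \<in> Z \<or> is_sep V E TT {v} {t i} Z" if i: "i \<in> idx r" and v: "v \<in> BB i" for i v
  proof (cases "v \<in> Z")
    case False
    have "(v, t i) \<notin> (del_arcs E Z)\<^sup>*"
    proof
      assume p: "(v, t i) \<in> (del_arcs E Z)\<^sup>*"
      have "(v, t i) \<in> (del_arcs GS Z)\<^sup>*" using RE2[OF p B_notS[OF i v]] by blast
      moreover have "(s i, v) \<in> del_arcs GS Z" using Es_src[OF i v] sZ[OF i] False
        unfolding del_arcs_def by blast
      ultimately have "(s i, t i) \<in> (del_arcs GS Z)\<^sup>*" by (meson converse_rtrancl_into_rtrancl)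
      then show False using np[OF i] by contradiction
    qed
    then have "is_sep V E TT {v} {t i} Z" using ZV ZT False tZ[OF i] unfolding is_sep_def by blast
    then show ?thesis by blast
  qed simp
  then show ?thesis using m1 by blast
qed

lemma mc_bwd:
  assumes m1: "multicut V E r s t Z" and pr: "\<forall>i\<in>idx r. \<forall>v\<in>BB i. v \<in> Z \<or> is_sep V E TT {v} {t i} Z"
  shows "multicut V GS r s t Z"
proof -
  have ZV: "Z \<subseteq> V" and ZT: "Z \<inter> TT = {}" using m1 unfolding multicut_def by auto
  have "(s i, t i) \<notin> (del_arcs GS Z)\<^sup>*" if i: "i \<in> idx r" for i
  proof
    assume p: "(s i, t i) \<in> (del_arcs GS Z)\<^sup>*"
    have ne: "t i \<noteq> s i" using st[OF i i] by simp
    obtain w where w: "(s i, w) \<in> GS" "w \<notin> Z" "(w, t i) \<in> (del_arcs E Z)\<^sup>*"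
      using SSt[OF i p ne] by blast
    have "\<exists>c\<in>BB i. c \<notin> Z \<and> (c, t i) \<in> (del_arcs E Z)\<^sup>*"
      using w(1)
    proof (cases rule: Es_cases)
      case a then show ?thesis using i by blast
    next
      case (b j) then have "j = i" using same_idx[OF i] by metis
      then show ?thesis using b(3) w(2,3) by blast
    next
      case (c j k)
      then have ji: "j = i" using same_idx[OF i] by metis
      have a1: "(s i, w) \<in> (del_arcs E (BB i))\<^sup>*" using avoid_B[OF c(1) c(5) c(6)] ji by simp
      have n1: "(s i, t i) \<notin> (del_arcs E (BB i))\<^sup>*" using B_sep[OF i] unfolding is_sep_def by blast
      have "(w, t i) \<notin> (del_arcs E (Z \<union> BB i))\<^sup>*"
      proof
        assume "(w, t i) \<in> (del_arcs E (Z \<union> BB i))\<^sup>*"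
        then have "(w, t i) \<in> (del_arcs E (BB i))\<^sup>*" by (rule del_rtr_anti) blast
        then have "(s i, t i) \<in> (del_arcs E (BB i))\<^sup>*" using a1 by (meson rtrancl_trans)
        then show False using n1 by contradiction
      qed
      then show ?thesis using path_hits[OF w(3)] by blast
    qed
    then obtain c where c: "c \<in> BB i" "c \<notin> Z" "(c, t i) \<in> (del_arcs E Z)\<^sup>*" by blast
    then have "is_sep V E TT {c} {t i} Z" using pr i by blast
    then show False using c(3) unfolding is_sep_def by blast
  qed
  then show ?thesis using ZV ZT unfolding multicut_def by blast
qed

lemma Es_sub: assumes "(u,v) \<in> GS" shows "(u,v) \<in> E\<^sup>*"
  using assms
proof (cases rule: Es_cases)
  case a then show ?thesis by blast
next
  case (b i) then show ?thesis using B_reach by blast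
next
  case (c i j) then show ?thesis by blast
qed

lemma Es_rtr: "(u,v) \<in> GS\<^sup>* \<Longrightarrow> (u,v) \<in> E\<^sup>*"
proof (induction rule: rtrancl_induct)
  case base then show ?case by simp
next
  case (step y z) then show ?case using Es_sub[OF step(2)] by (meson rtrancl_trans)
qed

lemma part5a: "src_set GS r s v \<subseteq> src_set E r s v"
  unfolding src_set_def using Es_rtr by blast

lemma part5b: assumes i: "i \<in> idx r" and a: "(s i, v) \<in> GS"
  shows "src_set GS r s v = src_set E r s v"
proof
  show "src_set GS r s v \<subseteq> src_set E r s v" by (rule part5a)
  have vB: "v \<in> (\<Union>i'\<in>idx r. BB i')" using a
  proof (cases rule: Es_cases)
    case a then show ?thesis using i by blast
  next
    case (b j) then show ?thesis by blast
  next
    case (c j k) then show ?thesis by blast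
  qed
  show "src_set E r s v \<subseteq> src_set GS r s v"
  proof
    fix x assume "x \<in> src_set E r s v"
    then obtain j where j: "x = s j" "j \<in> idx r" "(s j, v) \<in> E\<^sup>*" unfolding src_set_def by blast
    have "(s j, v) \<in> GS\<^sup>*"
    proof (cases "\<exists>b\<in>BB j. (b,v) \<in> E\<^sup>*")
      case True
      then obtain b where b: "b \<in> BB j" "(b,v) \<in> E\<^sup>*" by blast
      have "(b,v) \<in> (del_arcs E {})\<^sup>*" using b(2) by simp
      then have "(b,v) \<in> (del_arcs GS {})\<^sup>*" using RE2 B_notS[OF j(2) b(1)] by blast
      then have "(b,v) \<in> GS\<^sup>*" by simp
      moreover have "(s j, b) \<in> GS" using Es_src[OF j(2) b(1)] .
      ultimately show ?thesis by (meson converse_rtrancl_into_rtrancl)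
    next
      case False
      then show ?thesis using Es_src3[OF j(2) vB j(3) False] by blast
    qed
    then show "x \<in> src_set GS r s v" using j unfolding src_set_def by blast
  qed
qed

end

theorem mainTheorem11:
  fixes V :: "'a set" and E :: "('a \<times> 'a) set" and r p :: nat and s t :: "nat \<Rightarrow> 'a"
  assumes inst: "dag_mc_instance V E r s t p"
  defines "Es \<equiv> reduced_arcs V E r s t"
      and "T \<equiv> terminals r s t"
      and "B \<equiv> Bset V E r s t"
  shows "card (out_nbh Es (s ` idx r)) \<le> r * p \<and>
    (\<forall>i\<in>idx r. mincut_closest_to_X V Es T {s i} {t i} (B i)) \<and>
    (potential V Es r s t p = potential V E r s t p) \<and>
    (\<forall>Z \<subseteq> V. multicut V Es r s t Z \<longleftrightarrow>
           (multicut V E r s t Z \<and>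
            (\<forall>i\<in>idx r. \<forall>v\<in>B i. v \<in> Z \<or> is_sep V E T {v} {t i} Z))) \<and>
    ((\<exists>Z. solution V Es r s t p Z) \<longleftrightarrow>
           (\<exists>Z. solution V E r s t p Z \<and>
              (\<forall>i\<in>idx r. \<forall>v\<in>B i. v \<in> Z \<or> is_sep V E T {v} {t i} Z))) \<and>
    (\<forall>v\<in>V. src_set Es r s v \<subseteq> src_set E r s v) \<and>
    (\<forall>i\<in>idx r. \<forall>v. (s i, v) \<in> Es \<longrightarrow> src_set Es r s v = src_set E r s v)"
proof -
  interpret dmc V E r p s t using inst by (unfold_locales)
  have P4: "multicut V (reduced_arcs V E r s t) r s t Z \<longleftrightarrow>
           (multicut V E r s t Z \<and>
            (\<forall>i\<in>idx r. \<forall>v\<in>Bset V E r s t i. v \<in> Z \<or> is_sep V E (terminals r s t) {v} {t i} Z))" for Z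
  proof
    assume "multicut V (reduced_arcs V E r s t) r s t Z"
    then show "multicut V E r s t Z \<and>
            (\<forall>i\<in>idx r. \<forall>v\<in>Bset V E r s t i. v \<in> Z \<or> is_sep V E (terminals r s t) {v} {t i} Z)"
      by (rule mc_fwd)
  next
    assume h: "multicut V E r s t Z \<and>
            (\<forall>i\<in>idx r. \<forall>v\<in>Bset V E r s t i. v \<in> Z \<or> is_sep V E (terminals r s t) {v} {t i} Z)"
    show "multicut V (reduced_arcs V E r s t) r s t Z"
      using mc_bwd[of Z] h by (elim conjE)
  qed
  have P4b: "(\<exists>Z. solution V (reduced_arcs V E r s t) r s t p Z) \<longleftrightarrow>
           (\<exists>Z. solution V E r s t p Z \<and>
              (\<forall>i\<in>idx r. \<forall>v\<in>Bset V E r s t i. v \<in> Z \<or> is_sep V E (terminals r s t) {v} {t i} Z))"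
    unfolding solution_def P4 by (rule iffI; elim exE conjE; blast)
  have P2: "\<forall>i\<in>idx r. mincut_closest_to_X V (reduced_arcs V E r s t) (terminals r s t) {s i} {t i} (Bset V E r s t i)"
    using part2 by blast
  have P5a: "\<forall>v\<in>V. src_set (reduced_arcs V E r s t) r s v \<subseteq> src_set E r s v"
    using part5a by blast
  have P5b: "\<forall>i\<in>idx r. \<forall>v. (s i, v) \<in> reduced_arcs V E r s t \<longrightarrow>
      src_set (reduced_arcs V E r s t) r s v = src_set E r s v"
    using part5b by blast
  have P4': "\<forall>Z \<subseteq> V. multicut V (reduced_arcs V E r s t) r s t Z \<longleftrightarrow>
           (multicut V E r s t Z \<and>
            (\<forall>i\<in>idx r. \<forall>v\<in>Bset V E r s t i. v \<in> Z \<or> is_sep V E (terminals r s t) {v} {t i} Z))"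
    using P4 by blast
  show ?thesis unfolding Es_def T_def B_def
    using part1 P2 part3 P4' P4b P5a P5b by (intro conjI)
qed

end
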